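(* Every system execution $M$ (in the sense of the context) that satisfies the Lazy Set axioms A0, A1, A2 is linearizable: there is a linear ordering $<_0$ of the events of $M$ extending $<^M$ such that $<_0$ together with $\gamma^M$ satisfies FS0, FS1 and FS2.
   Context: A system execution $M$ consists of: a set of events, partitioned into low-level events (actions) and high-level events; unary predicates $\mathrm{Add},\mathrm{Rem},\mathrm{Cnt}$ on events; a binary relation $<$ (temporal precedence) on events which is a partial order such that every event has only finitely many predecessors, and moreover Lamport's finiteness property holds: for every event $x$ there is a finite set $E$ such that every event $y\notin E$ satisfies $x<y$; functions $\mathrm{Begin},\mathrm{End}$ from events to actions, with $\mathrm{Begin}(e)=\mathrm{End}(e)=e$ for every action $e$; functions $\chi$ from events to $\{0,1,f\}$, $\mathrm{val}$ from events to $\mathbb N$, and $\gamma$ from events to events. The order on all events is determined by the order on actions: for events $X,Y$ (actions or high-level), $X<Y$ iff $\mathrm{End}(X)<\mathrm{Begin}(Y)$. Notation: for $p\in\{0,1,f\}$, $\mathrm{Add}^p(a)$ abbreviates $\mathrm{Add}(a)\wedge\chi(a)=p$, and $\mathrm{Rem}^p,\mathrm{Cnt}^p$ similarly; for $p\in\{0,1\}$, $\mathrm{Op}^p(a)$ abbreviates $(\mathrm{Add}(a)\vee\mathrm{Rem}(a)\vee\mathrm{Cnt}(a))\wedge\chi(a)=p$. Lazy Set axioms: A0: $\mathrm{Add},\mathrm{Rem},\mathrm{Cnt}$ are pairwise disjoint; $\mathrm{Add}$ and $\mathrm{Rem}$ events are actions and $\mathrm{Cnt}$ events are high-level events; for every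 event $X$, $\mathrm{Begin}(X)$ and $\mathrm{End}(X)$ are actions; for $\mathrm{Cnt}$ events $E$, $\mathrm{Begin}(E)<\mathrm{End}(E)$; restricted to actions, $<$ is a linear ordering. A1: for every event $A$ with $\mathrm{Op}^1(A)$: $\mathrm{Add}^0(\gamma(A))$, $\mathrm{val}(\gamma(A))=\mathrm{val}(A)$, $\gamma(A)<\mathrm{End}(A)$, and there is no event $R$ with $\mathrm{Rem}^1(R)$, $\gamma(R)=\gamma(A)$ and $\gamma(A)<R<A$. A2: for all events $A,B$: if $\mathrm{Op}^0(B)$, $\mathrm{Add}^0(A)$, $A<B$ and $\mathrm{val}(A)=\mathrm{val}(B)$, then there is an event $R$ with $\mathrm{Rem}^1(R)$, $A=\gamma(R)$ and $R<\mathrm{End}(B)$. Linear specification (for a linear order $<_0$ and function $\gamma$): FS0: $<_0$ is a linear ordering of the events; $\mathrm{Add},\mathrm{Rem},\mathrm{Cnt}$ are pairwise disjoint; $\gamma$ is defined on the $\mathrm{Op}^1$ events and its values are $\mathrm{Add}^0$ events. FS1: for every event $a$ with $\mathrm{Op}^1(a)$: $\gamma(a)<_0 a$, $\mathrm{Add}^0(\gamma(a))$, $\mathrm{val}(a)=\mathrm{val}(\gamma(a))$, and there is no event $r$ with $\mathrm{Rem}^1(r)$, $\gamma(r)=\gamma(a)$ and $\gamma(a)<_0 r<_0 a$. FS2: for all events $a<_0b$ with $\mathrm{Add}^0(a)$ and $\mathrm{Op}^0(b)$: if $\mathrm{val}(a)=\mathrm{val}(b)$ then there is an event $r$ with $a<_0r<_0b$,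 $\mathrm{Rem}^1(r)$ and $a=\gamma(r)$. *)

theory Defs
  imports Main
begin

datatype chi_val = C0 | C1 | Cf

text \<open>A system execution M: carrier set of events, the predicate singling out the
 low-level events (actions; the others are high-level events), predicates Add, Rem, Cnt,
 the precedence relation, Begin, End, chi, val, gamma.\<close>
record 'e sysexec =
  events :: "'e set"
  action :: "'e \<Rightarrow> bool"
  isAdd  :: "'e \<Rightarrow> bool"
  isRem  :: "'e \<Rightarrow> bool"
  isCnt  :: "'e \<Rightarrow> bool"
  prec   :: "'e \<Rightarrow> 'e \<Rightarrow> bool"
  bgn    :: "'e \<Rightarrow> 'e"
  fin    :: "'e \<Rightarrow> 'e"
  chi    :: "'e \<Rightarrow> chi_val"
  val    :: "'e \<Rightarrow> nat"
  gam    :: "'e \<Rightarrow> 'e"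

definition system_execution :: "'e sysexec \<Rightarrow> bool" where
  "system_execution M \<longleftrightarrow>
     (let E = events M; lt = prec M in
      \<comment> \<open>Begin, End map events to actions, gamma maps events to events\<close>
      (\<forall>x\<in>E. bgn M x \<in> E \<and> action M (bgn M x) \<and> fin M x \<in> E \<and> action M (fin M x)
              \<and> gam M x \<in> E) \<and>
      (\<forall>x\<in>E. action M x \<longrightarrow> bgn M x = x \<and> fin M x = x) \<and>
      \<comment> \<open>< is a (strict) partial order on the events\<close>
      (\<forall>x\<in>E. \<not> lt x x) \<and>
      (\<forall>x\<in>E. \<forall>y\<in>E. \<forall>z\<in>E. lt x y \<longrightarrow> lt y z \<longrightarrow> lt x z) \<and>
      \<comment> \<open>finitely many predecessors\<close>
      (\<forall>x\<in>E. finite {y\<in>E. lt y x}) \<and>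
      \<comment> \<open>Lamport's finiteness property\<close>
      (\<forall>x\<in>E. \<exists>F. finite F \<and> (\<forall>y\<in>E. y \<notin> F \<longrightarrow> lt x y)) \<and>
      \<comment> \<open>the order on all events is determined by the order on actions\<close>
      (\<forall>X\<in>E. \<forall>Y\<in>E. lt X Y \<longleftrightarrow> lt (fin M X) (bgn M Y)))"

definition Opp :: "'e sysexec \<Rightarrow> chi_val \<Rightarrow> 'e \<Rightarrow> bool" where
  "Opp M p a \<longleftrightarrow> (isAdd M a \<or> isRem M a \<or> isCnt M a) \<and> chi M a = p"

definition Addp :: "'e sysexec \<Rightarrow> chi_val \<Rightarrow> 'e \<Rightarrow> bool" where
  "Addp M p a \<longleftrightarrow> isAdd M a \<and> chi M a = p"

definition Remp :: "'e sysexec \<Rightarrow> chi_val \<Rightarrow> 'e \<Rightarrow> bool" where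
  "Remp M p a \<longleftrightarrow> isRem M a \<and> chi M a = p"

definition A0 :: "'e sysexec \<Rightarrow> bool" where
  "A0 M \<longleftrightarrow> (let E = events M; lt = prec M in
     (\<forall>x\<in>E. \<not> (isAdd M x \<and> isRem M x) \<and> \<not> (isAdd M x \<and> isCnt M x)
             \<and> \<not> (isRem M x \<and> isCnt M x)) \<and>
     (\<forall>x\<in>E. (isAdd M x \<or> isRem M x) \<longrightarrow> action M x) \<and>
     (\<forall>x\<in>E. isCnt M x \<longrightarrow> \<not> action M x) \<and>
     (\<forall>x\<in>E. action M (bgn M x) \<and> action M (fin M x)) \<and>
     (\<forall>x\<in>E. isCnt M x \<longrightarrow> lt (bgn M x) (fin M x)) \<and>
     (\<forall>x\<in>E. \<forall>y\<in>E. action M x \<longrightarrow> action M y \<longrightarrow> x \<noteq> y \<longrightarrow> lt x y \<or> lt y x))"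

definition A1 :: "'e sysexec \<Rightarrow> bool" where
  "A1 M \<longleftrightarrow> (let E = events M; lt = prec M; g = gam M in
     \<forall>A\<in>E. Opp M C1 A \<longrightarrow>
        Addp M C0 (g A) \<and> val M (g A) = val M A \<and> lt (g A) (fin M A) \<and>
        \<not> (\<exists>R\<in>E. Remp M C1 R \<and> g R = g A \<and> lt (g A) R \<and> lt R A))"

definition A2 :: "'e sysexec \<Rightarrow> bool" where
  "A2 M \<longleftrightarrow> (let E = events M; lt = prec M; g = gam M in
     \<forall>A\<in>E. \<forall>B\<in>E. Opp M C0 B \<longrightarrow> Addp M C0 A \<longrightarrow> lt A B \<longrightarrow> val M A = val M B \<longrightarrow>
        (\<exists>R\<in>E. Remp M C1 R \<and> A = g R \<and> lt R (fin M B)))"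

definition FS0 :: "'e sysexec \<Rightarrow> ('e \<Rightarrow> 'e \<Rightarrow> bool) \<Rightarrow> bool" where
  "FS0 M lt0 \<longleftrightarrow> (let E = events M; g = gam M in
     (\<forall>x\<in>E. \<not> lt0 x x) \<and>
     (\<forall>x\<in>E. \<forall>y\<in>E. \<forall>z\<in>E. lt0 x y \<longrightarrow> lt0 y z \<longrightarrow> lt0 x z) \<and>
     (\<forall>x\<in>E. \<forall>y\<in>E. x \<noteq> y \<longrightarrow> lt0 x y \<or> lt0 y x) \<and>
     (\<forall>x\<in>E. \<not> (isAdd M x \<and> isRem M x) \<and> \<not> (isAdd M x \<and> isCnt M x)
             \<and> \<not> (isRem M x \<and> isCnt M x)) \<and>
     (\<forall>a\<in>E. Opp M C1 a \<longrightarrow> g a \<in> E \<and> Addp M C0 (g a)))"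

definition FS1 :: "'e sysexec \<Rightarrow> ('e \<Rightarrow> 'e \<Rightarrow> bool) \<Rightarrow> bool" where
  "FS1 M lt0 \<longleftrightarrow> (let E = events M; g = gam M in
     \<forall>a\<in>E. Opp M C1 a \<longrightarrow>
        lt0 (g a) a \<and> Addp M C0 (g a) \<and> val M a = val M (g a) \<and>
        \<not> (\<exists>r\<in>E. Remp M C1 r \<and> g r = g a \<and> lt0 (g a) r \<and> lt0 r a))"

definition FS2 :: "'e sysexec \<Rightarrow> ('e \<Rightarrow> 'e \<Rightarrow> bool) \<Rightarrow> bool" where
  "FS2 M lt0 \<longleftrightarrow> (let E = events M; g = gam M in
     \<forall>a\<in>E. \<forall>b\<in>E. lt0 a b \<longrightarrow> Addp M C0 a \<longrightarrow> Opp M C0 b \<longrightarrow> val M a = val M b \<longrightarrow>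
        (\<exists>r\<in>E. lt0 a r \<and> lt0 r b \<and> Remp M C1 r \<and> a = g r))"

end

theory Submission
  imports Defs
begin

definition WO :: "'e rel" where "WO = (SOME r. well_order_on UNIV r)"

lemma WO_props: "trans WO" "antisym WO" "\<And>x y. x \<noteq> y \<Longrightarrow> (x,y) \<in> WO \<or> (y,x) \<in> WO"
proof -
  have w: "well_order_on UNIV (WO::'e rel)" unfolding WO_def by (rule someI_ex, rule well_order_on)
  then show "trans (WO::'e rel)" "antisym (WO::'e rel)"
    by (auto simp: well_order_on_def linear_order_on_def partial_order_on_def preorder_on_def)
  show "\<And>x y. x \<noteq> y \<Longrightarrow> (x,y) \<in> (WO::'e rel) \<or> (y,x) \<in> WO"
    using w by (auto simp: well_order_on_def linear_order_on_def total_on_def)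
qed

lemma WO_trans: assumes "(x,y) \<in> WO" "(y,z) \<in> WO" shows "(x,z) \<in> WO"
  by (rule transD[OF WO_props(1) assms])

lemma WO_antisym: assumes "(x,y) \<in> WO" "(y,x) \<in> WO" shows "x = y"
  by (rule antisymD[OF WO_props(2) assms])

definition keylt :: "'e sysexec \<Rightarrow> ('e \<times> nat) \<Rightarrow> ('e \<times> nat) \<Rightarrow> bool" where
  "keylt M k1 k2 \<longleftrightarrow> prec M (fst k1) (fst k2) \<or> (fst k1 = fst k2 \<and> snd k1 < snd k2)"

definition goodR :: "'e sysexec \<Rightarrow> 'e \<Rightarrow> 'e \<Rightarrow> bool" where
  "goodR M x R \<longleftrightarrow> R \<in> events M \<and> Remp M C1 R \<and> Addp M C0 (gam M R) \<and> val M (gam M R) = val M x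
     \<and> prec M (gam M R) (bgn M x) \<and> \<not> prec M R (bgn M x) \<and> prec M R (fin M x)"

definition key :: "'e sysexec \<Rightarrow> 'e \<Rightarrow> 'e \<times> nat" where
  "key M x = (if action M x then (x, 1)
     else if isCnt M x \<and> chi M x = C1 then
        (if prec M (gam M x) (bgn M x) then (bgn M x, 0) else (gam M x, 2))
     else if isCnt M x \<and> chi M x = C0 then
        (if \<exists>R. goodR M x R then (SOME R. goodR M x R, 2) else (bgn M x, 0))
     else (bgn M x, 1))"

definition lin0 :: "'e sysexec \<Rightarrow> 'e \<Rightarrow> 'e \<Rightarrow> bool" where
  "lin0 M x y \<longleftrightarrow> keylt M (key M x) (key M y) \<or> (key M x = key M y \<and> (x, y) \<in> WO \<and> x \<noteq> y)"

locale L =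
  fixes M :: "'e sysexec"
  assumes se: "system_execution M" and a0: "A0 M" and a1: "A1 M" and a2: "A2 M"
begin

abbreviation E where "E \<equiv> events M"
abbreviation lt where "lt \<equiv> prec M"

lemma bgn: "x \<in> E \<Longrightarrow> bgn M x \<in> E \<and> action M (bgn M x)"
  using se unfolding system_execution_def Let_def by blast
lemma fin: "x \<in> E \<Longrightarrow> fin M x \<in> E \<and> action M (fin M x)"
  using se unfolding system_execution_def Let_def by blast
lemma gamE: "x \<in> E \<Longrightarrow> gam M x \<in> E"
  using se unfolding system_execution_def Let_def by blast
lemma actid: "x \<in> E \<Longrightarrow> action M x \<Longrightarrow> bgn M x = x \<and> fin M x = x"
  using se unfolding system_execution_def Let_def by blast
lemma irr: "x \<in> E \<Longrightarrow> \<not> lt x x"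
  using se unfolding system_execution_def Let_def by blast
lemma tr: "x \<in> E \<Longrightarrow> y \<in> E \<Longrightarrow> z \<in> E \<Longrightarrow> lt x y \<Longrightarrow> lt y z \<Longrightarrow> lt x z"
  using se unfolding system_execution_def Let_def by blast
lemma piff: "x \<in> E \<Longrightarrow> y \<in> E \<Longrightarrow> lt x y \<longleftrightarrow> lt (fin M x) (bgn M y)"
  using se unfolding system_execution_def Let_def by blast
lemma disj: "x \<in> E \<Longrightarrow> \<not> (isAdd M x \<and> isRem M x) \<and> \<not> (isAdd M x \<and> isCnt M x) \<and> \<not> (isRem M x \<and> isCnt M x)"
  using a0 unfolding A0_def Let_def by blast
lemma ar_act: "x \<in> E \<Longrightarrow> isAdd M x \<or> isRem M x \<Longrightarrow> action M x"
  using a0 unfolding A0_def Let_def by blast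
lemma cnt_nact: "x \<in> E \<Longrightarrow> isCnt M x \<Longrightarrow> \<not> action M x"
  using a0 unfolding A0_def Let_def by blast
lemma cnt_bf: "x \<in> E \<Longrightarrow> isCnt M x \<Longrightarrow> lt (bgn M x) (fin M x)"
  using a0 unfolding A0_def Let_def by blast
lemma lin: "x \<in> E \<Longrightarrow> y \<in> E \<Longrightarrow> action M x \<Longrightarrow> action M y \<Longrightarrow> x \<noteq> y \<Longrightarrow> lt x y \<or> lt y x"
  using a0 unfolding A0_def Let_def by blast
lemma ax1: "A \<in> E \<Longrightarrow> Opp M C1 A \<Longrightarrow> Addp M C0 (gam M A) \<and> val M (gam M A) = val M A \<and> lt (gam M A) (fin M A) \<and>
        \<not> (\<exists>R\<in>E. Remp M C1 R \<and> gam M R = gam M A \<and> lt (gam M A) R \<and> lt R A)"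
  using a1 unfolding A1_def Let_def by blast
lemma ax2: "A \<in> E \<Longrightarrow> B \<in> E \<Longrightarrow> Opp M C0 B \<Longrightarrow> Addp M C0 A \<Longrightarrow> lt A B \<Longrightarrow> val M A = val M B \<Longrightarrow>
        (\<exists>R\<in>E. Remp M C1 R \<and> A = gam M R \<and> lt R (fin M B))"
  using a2 unfolding A2_def Let_def by blast

lemma rem_act: "R \<in> E \<Longrightarrow> Remp M C1 R \<Longrightarrow> action M R"
  unfolding Remp_def using ar_act by blast
lemma add_act: "R \<in> E \<Longrightarrow> Addp M p R \<Longrightarrow> action M R"
  unfolding Addp_def using ar_act by blast

lemma rem_gam: "R \<in> E \<Longrightarrow> Remp M C1 R \<Longrightarrow> lt (gam M R) R \<and> Addp M C0 (gam M R) \<and> val M (gam M R) = val M R"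
proof -
  assume "R \<in> E" "Remp M C1 R"
  moreover then have "Opp M C1 R" by (auto simp: Opp_def Remp_def)
  ultimately have "Addp M C0 (gam M R) \<and> val M (gam M R) = val M R \<and> lt (gam M R) (fin M R)" using ax1 by blast
  moreover have "fin M R = R" using actid rem_act \<open>R \<in> E\<close> \<open>Remp M C1 R\<close> by blast
  ultimately show ?thesis by simp
qed

lemma rem_uniq: "R1 \<in> E \<Longrightarrow> R2 \<in> E \<Longrightarrow> Remp M C1 R1 \<Longrightarrow> Remp M C1 R2 \<Longrightarrow> gam M R1 = gam M R2 \<Longrightarrow> R1 = R2"
proof (rule ccontr)
  assume h: "R1 \<in> E" "R2 \<in> E" "Remp M C1 R1" "Remp M C1 R2" "gam M R1 = gam M R2" "R1 \<noteq> R2"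
  have o2: "Opp M C1 R2" "Opp M C1 R1" using h by (auto simp: Opp_def Remp_def)
  have "lt R1 R2 \<or> lt R2 R1" using lin h rem_act by blast
  then show False
  proof
    assume "lt R1 R2" then show False using ax1[OF h(2) o2(1)] rem_gam[OF h(1) h(3)] h by auto
  next
    assume "lt R2 R1" then show False using ax1[OF h(1) o2(2)] rem_gam[OF h(2) h(4)] h by auto
  qed
qed

lemma key_act: "x \<in> E \<Longrightarrow> fst (key M x) \<in> E \<and> action M (fst (key M x))"
proof -
  assume x: "x \<in> E"
  show ?thesis
  proof (cases "action M x")
    case True then show ?thesis using x by (simp add: key_def)
  next
    case na: False
    show ?thesis
    proof (cases "isCnt M x \<and> chi M x = C1")
      case True
      then have "Opp M C1 x" by (simp add: Opp_def)
      then have "gam M x \<in> E \<and> action M (gam M x)" using ax1 x gamE add_act by blast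
      then show ?thesis using True na x bgn by (simp add: key_def)
    next
      case False
      have "goodR M x R \<Longrightarrow> R \<in> E \<and> action M R" for R using rem_act by (auto simp: goodR_def)
      moreover have "(\<exists>R. goodR M x R) \<Longrightarrow> goodR M x (SOME R. goodR M x R)"
        by (rule someI_ex)
      ultimately have "(\<exists>R. goodR M x R) \<Longrightarrow> (SOME R. goodR M x R) \<in> E \<and> action M (SOME R. goodR M x R)"
        by blast
      then show ?thesis using False na x bgn by (auto simp: key_def)
    qed
  qed
qed

abbreviation le where "le a b \<equiv> a = b \<or> lt a b"

lemma bgn_le_fin: "x \<in> E \<Longrightarrow> le (bgn M x) (fin M x)"
proof -
  assume x: "x \<in> E"
  have "\<not> lt (fin M x) (bgn M x)" using piff[OF x x] irr[OF x] by simp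
  then show ?thesis using lin[of "bgn M x" "fin M x"] bgn[OF x] fin[OF x] by blast
qed

lemma key_bounds: "x \<in> E \<Longrightarrow> le (bgn M x) (fst (key M x)) \<and> le (fst (key M x)) (fin M x)"
proof -
  assume x: "x \<in> E"
  show ?thesis
  proof (cases "action M x")
    case True then show ?thesis using x actid by (simp add: key_def)
  next
    case na: False
    show ?thesis
    proof (cases "isCnt M x \<and> chi M x = C1")
      case True
      then have "Opp M C1 x" by (simp add: Opp_def)
      then have g: "gam M x \<in> E \<and> action M (gam M x) \<and> lt (gam M x) (fin M x)" using ax1 x gamE add_act by blast
      show ?thesis
      proof (cases "lt (gam M x) (bgn M x)")
        case True then show ?thesis using na x bgn_le_fin \<open>isCnt M x \<and> chi M x = C1\<close> by (simp add: key_def)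
      next
        case False
        then have "le (bgn M x) (gam M x)" using lin[of "bgn M x" "gam M x"] g bgn[OF x] by blast
        then show ?thesis using False na g \<open>isCnt M x \<and> chi M x = C1\<close> by (simp add: key_def)
      qed
    next
      case nc1: False
      show ?thesis
      proof (cases "isCnt M x \<and> chi M x = C0 \<and> (\<exists>R. goodR M x R)")
        case True
        define R where "R = (SOME R. goodR M x R)"
        have gR: "goodR M x R" unfolding R_def using True someI_ex[of "goodR M x"] by blast
        then have "R \<in> E \<and> action M R" using rem_act by (auto simp: goodR_def)
        then have "le (bgn M x) R \<and> lt R (fin M x)" using gR lin[of "bgn M x" R] bgn[OF x] unfolding goodR_def by blast
        then show ?thesis using True na nc1 by (simp add: key_def R_def)
      next
        case False
        then show ?thesis using na nc1 x bgn_le_fin by (auto simp: key_def)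
      qed
    qed
  qed
qed


lemma keylt_trans: "fst k1 \<in> E \<Longrightarrow> fst k2 \<in> E \<Longrightarrow> fst k3 \<in> E \<Longrightarrow> keylt M k1 k2 \<Longrightarrow> keylt M k2 k3 \<Longrightarrow> keylt M k1 k3"
  unfolding keylt_def using tr[of "fst k1" "fst k2" "fst k3"] by auto

lemma keylt_irr: "fst k \<in> E \<Longrightarrow> \<not> keylt M k k"
  unfolding keylt_def using irr by simp

lemma keylt_total: "fst k1 \<in> E \<Longrightarrow> fst k2 \<in> E \<Longrightarrow> action M (fst k1) \<Longrightarrow> action M (fst k2) \<Longrightarrow> k1 \<noteq> k2
   \<Longrightarrow> keylt M k1 k2 \<or> keylt M k2 k1"
  unfolding keylt_def using lin[of "fst k1" "fst k2"] by (cases "fst k1 = fst k2") (auto simp: prod_eq_iff)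

lemma lin0_irr: "x \<in> E \<Longrightarrow> \<not> lin0 M x x"
  unfolding lin0_def using keylt_irr key_act by blast

lemma lin0_trans: assumes "x \<in> E" "y \<in> E" "z \<in> E" "lin0 M x y" "lin0 M y z" shows "lin0 M x z"
proof -
  have k: "fst (key M x) \<in> E" "fst (key M y) \<in> E" "fst (key M z) \<in> E" using key_act assms by blast+
  show ?thesis
  proof (cases "key M x = key M y")
    case True
    show ?thesis
    proof (cases "key M y = key M z")
      case True2: True
      have W: "(x,y) \<in> WO" "(y,z) \<in> WO" "x \<noteq> y" "y \<noteq> z" using assms(4,5) True True2 keylt_irr[OF k(2)] unfolding lin0_def by auto
      have "(x,z) \<in> WO" by (rule WO_trans[OF W(1) W(2)])
      moreover have "x \<noteq> z"
      proof
        assume "x = z"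
        then have "(y,x) \<in> WO" using \<open>(y,z) \<in> WO\<close> by simp
        then show False using WO_antisym[OF W(1)] W(3) by simp
      qed
      ultimately show ?thesis using True True2 unfolding lin0_def by simp
    next
      case False
      then have "keylt M (key M y) (key M z)" using assms(5) unfolding lin0_def by auto
      then show ?thesis using True unfolding lin0_def by simp
    qed
  next
    case False
    then have xy: "keylt M (key M x) (key M y)" using assms(4) unfolding lin0_def by auto
    show ?thesis
    proof (cases "key M y = key M z")
      case True then show ?thesis using xy unfolding lin0_def by simp
    next
      case False
      then have "keylt M (key M y) (key M z)" using assms(5) unfolding lin0_def by auto
      then show ?thesis using xy keylt_trans[OF k] unfolding lin0_def by blast
    qed
  qed
qed

lemma lin0_total: assumes "x \<in> E" "y \<in> E" "x \<noteq> y" shows "lin0 M x y \<or> lin0 M y x"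
proof (cases "key M x = key M y")
  case True then show ?thesis using WO_props(3)[OF assms(3)] assms unfolding lin0_def by auto
next
  case False then show ?thesis using keylt_total[of "key M x" "key M y"] key_act[OF assms(1)] key_act[OF assms(2)] unfolding lin0_def by blast
qed

lemma lin0_ext: assumes "x \<in> E" "y \<in> E" "lt x y" shows "lin0 M x y"
proof -
  have k: "fst (key M x) \<in> E" "fst (key M y) \<in> E" using key_act assms by blast+
  have b1: "le (fst (key M x)) (fin M x)" and b2: "le (bgn M y) (fst (key M y))" using key_bounds assms by blast+
  have m: "lt (fin M x) (bgn M y)" using piff assms by blast
  have fx: "fin M x \<in> E" and bY: "bgn M y \<in> E" using fin bgn assms by blast+
  have "lt (fst (key M x)) (bgn M y)" using b1 m tr[OF k(1) fx bY] by auto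
  then have "lt (fst (key M x)) (fst (key M y))" using b2 tr[OF k(1) bY k(2)] by auto
  then show ?thesis unfolding lin0_def keylt_def by simp
qed

lemma key_a: "x \<in> E \<Longrightarrow> action M x \<Longrightarrow> key M x = (x, 1)" by (simp add: key_def)

lemma lin0_act: "x \<in> E \<Longrightarrow> y \<in> E \<Longrightarrow> action M x \<Longrightarrow> action M y \<Longrightarrow> lin0 M x y \<longleftrightarrow> lt x y"
  unfolding lin0_def keylt_def by (auto simp: key_a)

lemma lin0_diff: "snd (key M x) \<noteq> snd (key M y) \<Longrightarrow> lin0 M x y \<longleftrightarrow> keylt M (key M x) (key M y)"
  unfolding lin0_def by auto

lemma opp_cases: "x \<in> E \<Longrightarrow> Opp M p x \<Longrightarrow> \<not> action M x \<Longrightarrow> isCnt M x \<and> chi M x = p"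
  unfolding Opp_def using ar_act by blast

lemma FS1_pt: assumes a: "a \<in> E" and o: "Opp M C1 a"
  shows "lin0 M (gam M a) a \<and> Addp M C0 (gam M a) \<and> val M a = val M (gam M a) \<and>
        \<not> (\<exists>r\<in>E. Remp M C1 r \<and> gam M r = gam M a \<and> lin0 M (gam M a) r \<and> lin0 M r a)"
proof -
  define g where "g = gam M a"
  have A: "Addp M C0 g \<and> val M g = val M a \<and> lt g (fin M a) \<and>
        \<not> (\<exists>R\<in>E. Remp M C1 R \<and> gam M R = g \<and> lt g R \<and> lt R a)" using ax1[OF a o] g_def by simp
  have gE: "g \<in> E" "action M g" using gamE a g_def add_act A by blast+
  have kg: "key M g = (g,1)" using key_a gE by blast
  have "lin0 M g a \<and> \<not> (\<exists>r\<in>E. Remp M C1 r \<and> gam M r = g \<and> lin0 M g r \<and> lin0 M r a)"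
  proof (cases "action M a")
    case True
    then have "fin M a = a" using actid a by blast
    then show ?thesis using A lin0_act gE a True rem_act by metis
  next
    case False
    then have c: "isCnt M a \<and> chi M a = C1" using opp_cases a o by blast
    show ?thesis
    proof (cases "lt g (bgn M a)")
      case True
      then have ka: "key M a = (bgn M a, 0)" using c False g_def by (simp add: key_def)
      have "lin0 M g a" using ka kg True lin0_diff unfolding keylt_def by simp
      moreover have "False" if r: "r \<in> E" "Remp M C1 r" "gam M r = g" "lin0 M g r" "lin0 M r a" for r
      proof -
        have ra: "action M r" using rem_act r by blast
        have "lt g r" using lin0_act gE r ra by blast
        have "key M r = (r,1)" using key_a r ra by blast
        then have "lt r (bgn M a)" using r(5) ka lin0_diff unfolding keylt_def by simp
        then have "lt r a" using piff[OF r(1) a] actid r ra by simp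
        then show False using A \<open>lt g r\<close> r by blast
      qed
      ultimately show ?thesis by blast
    next
      case nlt: False
      then have ka: "key M a = (g, 2)" using c False g_def by (simp add: key_def)
      have "lin0 M g a" using ka kg lin0_diff unfolding keylt_def by simp
      moreover have "False" if r: "r \<in> E" "Remp M C1 r" "gam M r = g" "lin0 M g r" "lin0 M r a" for r
      proof -
        have ra: "action M r" using rem_act r by blast
        have "lt g r" using lin0_act gE r ra by blast
        have "key M r = (r,1)" using key_a r ra by blast
        then have "lt r g \<or> r = g" using r(5) ka lin0_diff unfolding keylt_def by auto
        then show False using \<open>lt g r\<close> irr tr r gE by metis
      qed
      ultimately show ?thesis by blast
    qed
  qed
  then show ?thesis using A g_def by simp
qed

lemma rem_after: "r \<in> E \<Longrightarrow> Remp M C1 r \<Longrightarrow> lin0 M (gam M r) r"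
  using rem_gam gamE rem_act add_act lin0_act by meson

lemma FS2_pt: assumes a: "a \<in> E" and b: "b \<in> E" and ab: "lin0 M a b" and ad: "Addp M C0 a"
  and ob: "Opp M C0 b" and v: "val M a = val M b"
  shows "\<exists>r\<in>E. lin0 M a r \<and> lin0 M r b \<and> Remp M C1 r \<and> a = gam M r"
proof -
  have aa: "action M a" using add_act a ad by blast
  have ka: "key M a = (a,1)" using key_a a aa by blast
  have "\<exists>r\<in>E. lin0 M r b \<and> Remp M C1 r \<and> a = gam M r"
  proof (cases "action M b")
    case True
    then have "lt a b" using lin0_act a b aa ab by blast
    then obtain R where R: "R \<in> E" "Remp M C1 R" "a = gam M R" "lt R (fin M b)" using ax2 a b ob ad v by blast
    have "fin M b = b" using actid b True by blast
    then have "lin0 M R b" using R lin0_act rem_act b True by metis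
    then show ?thesis using R by blast
  next
    case nb: False
    then have c: "isCnt M b \<and> chi M b = C0" using opp_cases b ob by blast
    show ?thesis
    proof (cases "\<exists>R. goodR M b R")
      case False
      then have kb: "key M b = (bgn M b, 0)" using c nb by (simp add: key_def)
      then have "lt a (bgn M b)" using ab ka lin0_diff unfolding keylt_def by simp
      then have "lt a b" using piff[OF a b] actid a aa by simp
      then obtain R where R: "R \<in> E" "Remp M C1 R" "a = gam M R" "lt R (fin M b)" using ax2 a b ob ad v by blast
      have "lt R (bgn M b)"
      proof (rule ccontr)
        assume "\<not> lt R (bgn M b)"
        then have "goodR M b R" unfolding goodR_def using R ad v \<open>lt a (bgn M b)\<close> by simp
        then show False using False by blast
      qed
      moreover have "key M R = (R,1)" using key_a R rem_act by blast
      ultimately have "lin0 M R b" using kb lin0_diff unfolding keylt_def by simp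
      then show ?thesis using R by blast
    next
      case True
      define R where "R = (SOME R. goodR M b R)"
      have gR: "goodR M b R" unfolding R_def using True someI_ex[of "goodR M b"] by blast
      then have kb: "key M b = (R, 2)" using c nb R_def True by (simp add: key_def)
      have RE: "R \<in> E" "Remp M C1 R" "action M R" using gR rem_act unfolding goodR_def by blast+
      have kR: "key M R = (R,1)" using key_a RE by blast
      have Rb: "lin0 M R b" using kb kR lin0_diff unfolding keylt_def by simp
      define a0 where "a0 = gam M R"
      have a0: "a0 \<in> E" "Addp M C0 a0" "action M a0" "val M a0 = val M b" "lt a0 R"
        using gR gamE RE rem_gam add_act unfolding a0_def goodR_def by blast+
      have "lt a R \<or> a = R" using ab ka kb lin0_diff unfolding keylt_def by auto
      moreover have "a \<noteq> R" using ad RE disj a unfolding Addp_def Remp_def by blast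
      ultimately have aR: "lt a R" by blast
      show ?thesis
      proof (cases "a = a0")
        case True then show ?thesis using Rb RE a0_def by blast
      next
        case False
        then have "lt a a0 \<or> lt a0 a" using lin a a0 aa by blast
        moreover have "\<not> lt a0 a"
        proof
          assume "lt a0 a"
          moreover have "Opp M C0 a" using ad unfolding Opp_def Addp_def by blast
          ultimately obtain R2 where R2: "R2 \<in> E" "Remp M C1 R2" "a0 = gam M R2" "lt R2 (fin M a)"
            using ax2[OF a0(1) a] a0 ad v by metis
          have "R2 = R" using rem_uniq R2 RE a0_def by metis
          then have "lt R a" using R2 actid a aa by metis
          then show False using aR irr tr a RE by metis
        qed
        ultimately have "lt a a0" by blast
        moreover have "Opp M C0 a0" using a0 unfolding Opp_def Addp_def by blast
        ultimately obtain R2 where R2: "R2 \<in> E" "Remp M C1 R2" "a = gam M R2" "lt R2 (fin M a0)"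
          using ax2[OF a a0(1)] a0 ad v by metis
        have "lt R2 a0" using R2 actid a0 by metis
        then have "lt R2 R" using a0 tr R2 RE by metis
        then have "lin0 M R2 b" using kb key_a[OF R2(1) rem_act[OF R2(1) R2(2)]] lin0_diff unfolding keylt_def by simp
        then show ?thesis using R2 by blast
      qed
    qed
  qed
  then show ?thesis using rem_after by blast
qed

end

theorem theorem3p2:
  fixes M :: "'e sysexec"
  assumes "system_execution M" and "A0 M" and "A1 M" and "A2 M"
  shows "\<exists>lt0. (\<forall>x\<in>events M. \<forall>y\<in>events M. prec M x y \<longrightarrow> lt0 x y)
               \<and> FS0 M lt0 \<and> FS1 M lt0 \<and> FS2 M lt0"
proof -
  interpret L M using assms by unfold_locales
  have "FS0 M (lin0 M)" unfolding FS0_def Let_def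
  proof (intro conjI ballI impI)
    show "\<And>x. x \<in> events M \<Longrightarrow> \<not> lin0 M x x" by (rule lin0_irr)
    show "\<And>x y z. x \<in> events M \<Longrightarrow> y \<in> events M \<Longrightarrow> z \<in> events M \<Longrightarrow> lin0 M x y \<Longrightarrow> lin0 M y z \<Longrightarrow> lin0 M x z"
      by (rule lin0_trans)
    show "\<And>x y. x \<in> events M \<Longrightarrow> y \<in> events M \<Longrightarrow> x \<noteq> y \<Longrightarrow> lin0 M x y \<or> lin0 M y x"
      by (rule lin0_total)
    show "\<And>a. a \<in> events M \<Longrightarrow> Opp M C1 a \<Longrightarrow> gam M a \<in> events M" by (rule gamE)
    show "\<And>a. a \<in> events M \<Longrightarrow> Opp M C1 a \<Longrightarrow> Addp M C0 (gam M a)" using ax1 by blast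
  qed (use disj in blast)+
  moreover have "FS1 M (lin0 M)" unfolding FS1_def Let_def using FS1_pt by (intro ballI impI) simp
  moreover have "FS2 M (lin0 M)" unfolding FS2_def Let_def using FS2_pt by (intro ballI impI) simp
  moreover have "\<forall>x\<in>events M. \<forall>y\<in>events M. prec M x y \<longrightarrow> lin0 M x y" using lin0_ext by (intro ballI impI) simp
  ultimately show ?thesis by blast
qed

end
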